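(* Let $A=\begin{bmatrix} a_1 & b_1 & 0\\ b_1 & a_2 & b_2\\ 0 & b_2 & a_3\end{bmatrix}$ be a positive semidefinite matrix with nonnegative entries $a_1,a_2,a_3,b_1,b_2\geq 0$. Then $A$ is infinitely divisible if and only if $b_1b_2=0$.
   Context: For a nonnegative matrix $A=[a_{ij}]$ and $r>0$, $A^{\circ r}=[a_{ij}^r]$. A nonnegative symmetric matrix $A$ is infinitely divisible if $A^{\circ r}$ is positive semidefinite for every $r>0$. *)

theory Defs
  imports "HOL-Analysis.Analysis"
begin

definition hadamard_powr :: "real \<Rightarrow> real^'n^'n \<Rightarrow> real^'n^'n" where
  "hadamard_powr r A = (\<chi> i j. (A $ i $ j) powr r)"

definition nonneg_matrix :: "real^'n^'n \<Rightarrow> bool" where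
  "nonneg_matrix A \<longleftrightarrow> (\<forall>i j. 0 \<le> A $ i $ j)"

definition symmetric_matrix :: "real^'n^'n \<Rightarrow> bool" where
  "symmetric_matrix A \<longleftrightarrow> transpose A = A"

definition psd :: "real^'n^'n \<Rightarrow> bool" where
  "psd A \<longleftrightarrow> symmetric_matrix A \<and> (\<forall>x. 0 \<le> x \<bullet> (A *v x))"

definition infinitely_divisible :: "real^'n^'n \<Rightarrow> bool" where
  "infinitely_divisible A \<longleftrightarrow> nonneg_matrix A \<and> symmetric_matrix A \<and>
     (\<forall>r>0. psd (hadamard_powr r A))"

end

theory Submission
  imports Defs
begin
abbreviation M3 :: "real\<Rightarrow>real\<Rightarrow>real\<Rightarrow>real\<Rightarrow>real\<Rightarrow>real\<Rightarrow>real\<Rightarrow>real\<Rightarrow>real\<Rightarrow>real^3^3" where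
 "M3 a b c d e f g h i \<equiv> vector [vector [a,b,c], vector [d,e,f], vector [g,h,i]]"
lemma qf: "x \<bullet> (M3 a b c d e f g h i *v x) =
  x$1*(a*x$1+b*x$2+c*x$3) + x$2*(d*x$1+e*x$2+f*x$3) + x$3*(g*x$1+h*x$2+i*x$3)"
  by (simp add: inner_vec_def matrix_vector_mult_def sum_3 vector_3)
lemma hp: "hadamard_powr r (M3 a b c d e f g h i) = M3 (a powr r) (b powr r) (c powr r) (d powr r) (e powr r) (f powr r) (g powr r) (h powr r) (i powr r)"
  by (simp add: hadamard_powr_def vec_eq_iff forall_3 vector_3)
lemma sym: "symmetric_matrix (M3 a b c b e f c f i)"
  by (simp add: symmetric_matrix_def transpose_def vec_eq_iff forall_3 vector_3)
lemma nn: "nonneg_matrix (M3 a b c d e f g h i) \<longleftrightarrow> 0\<le>a\<and>0\<le>b\<and>0\<le>c\<and>0\<le>d\<and>0\<le>e\<and>0\<le>f\<and>0\<le>g\<and>0\<le>h\<and>0\<le>i"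
  by (simp add: nonneg_matrix_def forall_3 vector_3)
lemma ex: "\<exists>x::real^3. x$1 = u \<and> x$2 = v \<and> x$3 = w"
  by (rule exI[of _ "vector [u,v,w]"]) (simp add: vector_3)
lemma qf3: "x \<bullet> (M3 a b 0 b e f 0 f i *v x) =
  a*x$1*x$1 + 2*b*x$1*x$2 + e*x$2*x$2 + 2*f*x$2*x$3 + i*x$3*x$3"
  unfolding qf by (simp add: algebra_simps)
lemma hp0: "hadamard_powr r (M3 a b 0 b e f 0 f i) = M3 (a powr r) (b powr r) 0 (b powr r) (e powr r) (f powr r) 0 (f powr r) (i powr r)"
  unfolding hp by simp
lemma lim1: "(b::real) > 0 \<Longrightarrow> ((\<lambda>r. b powr r) \<longlongrightarrow> 1) (at_right 0)"
proof -
  assume "b>0"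
  have "((\<lambda>r. b powr r) \<longlongrightarrow> b powr 0) (at_right 0)"
    by (rule tendsto_powr) (use \<open>b>0\<close> in \<open>auto intro!: tendsto_intros\<close>)
  then show ?thesis using \<open>b>0\<close> by simp
qed
lemma evA: "(a::real) \<ge> 0 \<Longrightarrow> eventually (\<lambda>r. a powr r < 11/10) (at_right 0)"
proof (cases "a = 0")
  case True then show ?thesis by simp
next
  case False
  assume "a\<ge>0" then have "a>0" using False by simp
  from order_tendstoD(2)[OF lim1[OF this], of "11/10"] show ?thesis by simp
qed
lemma evB: "(b::real) > 0 \<Longrightarrow> eventually (\<lambda>r. b powr r > 9/10) (at_right 0)"
proof -
  assume "b>0"
  from order_tendstoD(1)[OF lim1[OF this], of "9/10"] show ?thesis by simp
qed
lemma quad: "(p::real) \<ge> 0 \<Longrightarrow> q \<ge> 0 \<Longrightarrow> c*c \<le> p*q \<Longrightarrow> 0 \<le> p*x*x + 2*c*x*y + q*y*y"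
proof (cases "p = 0")
  case True
  assume "q\<ge>0" "c*c \<le> p*q"
  then have "c*c \<le> 0" using True by simp
  then have "c*c = 0" using zero_le_square[of c] by linarith
  then have "c = 0" by simp
  then show ?thesis using True mult_nonneg_nonneg[OF \<open>q\<ge>0\<close> zero_le_square[of y]] by (simp add: mult.assoc)
next
  case False
  assume h: "p\<ge>0" "q\<ge>0" "c*c \<le> p*q"
  then have pp: "p>0" using False by simp
  have "p*(p*x*x + 2*c*x*y + q*y*y) = (p*x+c*y)^2 + (p*q-c*c)*y*y"
    by (simp add: algebra_simps power2_eq_square)
  also have "\<dots> \<ge> 0" using h mult_nonneg_nonneg[of "p*q - c*c" "y*y"] zero_le_square[of y] zero_le_power2[of "p*x+c*y"] by (simp add: mult.assoc)
  finally show ?thesis using pp by (simp add: zero_le_mult_iff)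
qed
lemma det2: "(p::real) \<ge> 0 \<Longrightarrow> q \<ge> 0 \<Longrightarrow> c \<ge> 0 \<Longrightarrow> (\<And>x y. 0 \<le> p*x*x + 2*c*x*y + q*y*y) \<Longrightarrow> c*c \<le> p*q"
proof -
  assume h: "p \<ge> 0" "q \<ge> 0" "c \<ge> 0" and f: "\<And>x y. 0 \<le> p*x*x + 2*c*x*y + q*y*y"
  show ?thesis
  proof (cases "p = 0")
    case True
    show ?thesis
    proof (rule ccontr)
      assume "\<not> ?thesis" then have "c \<noteq> 0" using True by auto
      then have "c > 0" using h by simp
      have "0 \<le> p*(-(q+1)/(2*c))*(-(q+1)/(2*c)) + 2*c*(-(q+1)/(2*c))*1 + q*1*1" by (rule f)
      moreover have "2*c*(-(q+1)/(2*c)) = -(q+1)" using \<open>c>0\<close> by simp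
      ultimately show False using True by simp
    qed
  next
    case False
    have "0 \<le> p*c*c + 2*c*c*(-p) + q*(-p)*(-p)" by (rule f)
    then have "0 \<le> p*(p*q - c*c)" by (simp add: algebra_simps)
    then show ?thesis using False h by (simp add: zero_le_mult_iff)
  qed
qed

lemma main:
  fixes a1 a2 a3 b1 b2 :: real
  assumes "0 \<le> a1" "0 \<le> a2" "0 \<le> a3" "0 \<le> b1" "0 \<le> b2"
    and P: "psd (M3 a1 b1 0 b1 a2 b2 0 b2 a3)"
  shows "infinitely_divisible (M3 a1 b1 0 b1 a2 b2 0 b2 a3) \<longleftrightarrow> b1 * b2 = 0"
proof
  assume ID: "infinitely_divisible (M3 a1 b1 0 b1 a2 b2 0 b2 a3)"
  show "b1 * b2 = 0"
  proof (rule ccontr)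
    assume "b1 * b2 \<noteq> 0"
    then have "b1 > 0" "b2 > 0" using assms by auto
    have "eventually (\<lambda>r. r > 0 \<and> a1 powr r < 11/10 \<and> a2 powr r < 11/10 \<and> a3 powr r < 11/10
       \<and> b1 powr r > 9/10 \<and> b2 powr r > 9/10) (at_right 0)"
      using evA[OF assms(1)] evA[OF assms(2)] evA[OF assms(3)] evB[OF \<open>b1>0\<close>] evB[OF \<open>b2>0\<close>]
        eventually_at_right_less[of "0::real"]
      by eventually_elim auto
    then obtain r where r: "r > 0" "a1 powr r < 11/10" "a2 powr r < 11/10" "a3 powr r < 11/10"
       "b1 powr r > 9/10" "b2 powr r > 9/10"
      using eventually_happens'[OF trivial_limit_at_right_real] by blast
    have "psd (hadamard_powr r (M3 a1 b1 0 b1 a2 b2 0 b2 a3))" using ID r(1)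
      unfolding infinitely_divisible_def by blast
    moreover obtain x :: "real^3" where x: "x$1 = 1" "x$2 = -1" "x$3 = 1" using ex by blast
    ultimately have "0 \<le> x \<bullet> (hadamard_powr r (M3 a1 b1 0 b1 a2 b2 0 b2 a3) *v x)"
      unfolding psd_def by blast
    then show False unfolding hp0 qf3 x using r by simp
  qed
next
  assume "b1 * b2 = 0"
  have Q: "0 \<le> x \<bullet> (M3 a1 b1 0 b1 a2 b2 0 b2 a3 *v x)" for x using P unfolding psd_def by blast
  have ND: "nonneg_matrix (M3 a1 b1 0 b1 a2 b2 0 b2 a3)" using assms by (simp add: nn)
  have S: "symmetric_matrix (M3 a1 b1 0 b1 a2 b2 0 b2 a3)" by (rule sym)
  show "infinitely_divisible (M3 a1 b1 0 b1 a2 b2 0 b2 a3)"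
    unfolding infinitely_divisible_def
  proof (intro conjI ND S allI impI)
    fix r :: real assume "r > 0"
    have S': "symmetric_matrix (hadamard_powr r (M3 a1 b1 0 b1 a2 b2 0 b2 a3))"
      by (simp add: hp sym)
    show "psd (hadamard_powr r (M3 a1 b1 0 b1 a2 b2 0 b2 a3))"
      unfolding psd_def
    proof (intro conjI S' allI)
      fix x :: "real^3"
      consider "b1 = 0" | "b2 = 0" using \<open>b1*b2=0\<close> by auto
      then show "0 \<le> x \<bullet> (hadamard_powr r (M3 a1 b1 0 b1 a2 b2 0 b2 a3) *v x)"
      proof cases
        case 1
        have "b2*b2 \<le> a2*a3"
        proof (rule det2)
          fix s t :: real
          obtain y :: "real^3" where y: "y$1 = 0" "y$2 = s" "y$3 = t" using ex by blast
          show "0 \<le> a2 * s * s + 2 * b2 * s * t + a3 * t * t" using Q[of y] unfolding qf3 y 1 by simp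
        qed (use assms in auto)
        then have "(b2*b2) powr r \<le> (a2*a3) powr r" using assms \<open>r>0\<close> by (intro powr_mono2) auto
        then have "b2 powr r * b2 powr r \<le> a2 powr r * a3 powr r" using assms by (simp add: powr_mult)
        from quad[OF _ _ this, of "x$2" "x$3"]
        have "0 \<le> a2 powr r * x$2 * x$2 + 2 * b2 powr r * x$2 * x$3 + a3 powr r * x$3 * x$3" by simp
        moreover have "0 \<le> a1 powr r * x$1 * x$1" by (metis mult.assoc mult_nonneg_nonneg powr_ge_zero zero_le_square)
        ultimately show ?thesis unfolding hp0 qf3 1 by simp
      next
        case 2
        have "b1*b1 \<le> a1*a2"
        proof (rule det2)
          fix s t :: real
          obtain y :: "real^3" where y: "y$1 = s" "y$2 = t" "y$3 = 0" using ex by blast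
          show "0 \<le> a1 * s * s + 2 * b1 * s * t + a2 * t * t" using Q[of y] unfolding qf3 y 2 by simp
        qed (use assms in auto)
        then have "(b1*b1) powr r \<le> (a1*a2) powr r" using assms \<open>r>0\<close> by (intro powr_mono2) auto
        then have "b1 powr r * b1 powr r \<le> a1 powr r * a2 powr r" using assms by (simp add: powr_mult)
        from quad[OF _ _ this, of "x$1" "x$2"]
        have "0 \<le> a1 powr r * x$1 * x$1 + 2 * b1 powr r * x$1 * x$2 + a2 powr r * x$2 * x$2" by simp
        moreover have "0 \<le> a3 powr r * x$3 * x$3" by (metis mult.assoc mult_nonneg_nonneg powr_ge_zero zero_le_square)
        ultimately show ?thesis unfolding hp0 qf3 2 by simp
      qed
    qed
  qed
qed
theorem lemma2p5:
  fixes a1 a2 a3 b1 b2 :: real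
  assumes "0 \<le> a1" "0 \<le> a2" "0 \<le> a3" "0 \<le> b1" "0 \<le> b2"
    and "psd (vector [vector [a1, b1, 0], vector [b1, a2, b2], vector [0, b2, a3]] :: real^3^3)"
  shows "infinitely_divisible
           (vector [vector [a1, b1, 0], vector [b1, a2, b2], vector [0, b2, a3]] :: real^3^3)
         \<longleftrightarrow> b1 * b2 = 0"
  using main[OF assms] .

end
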